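(* Let $n,m,n_f,\ell\in\mathbb{N}$, let $w>1$ be a number representable with $n$ bits of which the first $m$ are its integer part, and let $f\in[0,1]$ be given with $n_f$ bits after the binary point. Then the value $\hat{z}$ returned by Algorithm FractionalPower$(w,f,n,m,n_f,\ell)$ (described in the context), which performs arithmetic with $b=\max\{n,n_f,\lceil 5(\ell+2m+\ln n_f)\rceil,40\}$ bits after the binary point, satisfies $$|\hat{z}-w^f|\leq\left(\frac12\right)^{\ell-1}.$$
   Context: Fixed precision representation: a number $w\ge 0$ "given by $n$ bits of which the first $m$ correspond to its integer part" means $w=\sum_{j=m-n}^{m-1} w^{(j)}2^j$ with $w^{(j)}\in\{0,1\}$. For $x\geq 0$, "truncating $x$ to $b$ bits after the binary point" means replacing $x$ by $\lfloor 2^b x\rfloor/2^b$. All arithmetic inside a step is performed exactly; only the stated truncations introduce error. Algorithm SQRT$(w,n,m,b)$ (input $w\geq 1$): if $w=1$, return $1$. Otherwise: let $p\in\mathbb{N}$ with $2^{p}>w\geq 2^{p-1}$ and set $\hat{x}_0=2^{-p}$; let $s=\lceil\log_2 b\rceil$; for $i=1,\dots,s$ compute exactly $x_i=-w\hat{x}_{i-1}^2+2\hat{x}_{i-1}$ and let $\hat{x}_i$ be $x_i$ truncated to $b$ bits. Then let $q\in\mathbb{N}$ with $2^{1-q}>\hat{x}_s\geq 2^{-q}$ and set $\hat{y}_0=2^{\lfloor (q-1)/2\rfloor}$; for $j=1,\dots,s$ compute exactly $y_j=\frac12(3\hat{y}_{j-1}-\hat{x}_s\hat{y}_{j-1}^3)$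 and let $\hat{y}_j$ be $y_j$ truncated to $b$ bits. Return $\hat{y}_s$. Algorithm PowerOf2Roots$(w,k,n,m,b)$: set $\hat{z}_1=$ SQRT$(w,n,m,b)$; for $i=2,\dots,k$ set $\hat{z}_i=$ SQRT$(\hat{z}_{i-1},m+b,m,b)$. Return $\hat{z}_1,\dots,\hat{z}_k$. Algorithm FractionalPower$(w,f,n,m,n_f,\ell)$ (input $w\geq1$, $f=\sum_{i=1}^{n_f}f_i2^{-i}\in[0,1]$ or $f=1$, with bits $f_i\in\{0,1\}$): set $b=\max\{n,n_f,\lceil 5(\ell+2m+\ln n_f)\rceil,40\}$. If $f=1$ return $w$; if $f=0$ return $1$. Let $\hat{w}_1,\dots,\hat{w}_{n_f}$ be the outputs of PowerOf2Roots$(w,n_f,n,m,b)$. Set $\hat{z}=1$; for $i=1,\dots,n_f$, if $f_i=1$ replace $\hat{z}$ by $\hat{z}\hat{w}_i$ truncated to $b$ bits after the binary point. Return $\hat{z}$. *)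

theory Defs
  imports Complex_Main
begin

definition trunc_bits :: "nat \<Rightarrow> real \<Rightarrow> real" where
  "trunc_bits b x = real_of_int \<lfloor>2 ^ b * x\<rfloor> / 2 ^ b"

definition fixed_repr :: "nat \<Rightarrow> nat \<Rightarrow> real \<Rightarrow> bool" where
  "fixed_repr n m w \<longleftrightarrow> (\<exists>d :: int \<Rightarrow> bool.
      w = (\<Sum>j\<in>{int m - int n .. int m - 1}. of_bool (d j) * 2 powi j))"

text \<open>Algorithm SQRT(w,n,m,b). The parameters n, m only describe the input format.\<close>
definition SQRT :: "real \<Rightarrow> nat \<Rightarrow> nat \<Rightarrow> nat \<Rightarrow> real" where
  "SQRT w n m b =
    (if w = 1 then 1 else
     (let p = (LEAST p::nat. w < 2 ^ p);
          x0 = 2 powi (- int p);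
          s = nat \<lceil>log 2 (real b)\<rceil>;
          xs = ((\<lambda>x. trunc_bits b (- w * x ^ 2 + 2 * x)) ^^ s) x0;
          q = (LEAST q::nat. xs \<ge> 2 powi (- int q));
          y0 = 2 powi ((int q - 1) div 2)
      in ((\<lambda>y. trunc_bits b ((3 * y - xs * y ^ 3) / 2)) ^^ s) y0))"

text \<open>Algorithm PowerOf2Roots(w,k,n,m,b): the i-th output, for 1 \<le> i.\<close>
fun pow2roots :: "real \<Rightarrow> nat \<Rightarrow> nat \<Rightarrow> nat \<Rightarrow> nat \<Rightarrow> real" where
  "pow2roots w n m b 0 = w"
| "pow2roots w n m b (Suc 0) = SQRT w n m b"
| "pow2roots w n m b (Suc (Suc i)) = SQRT (pow2roots w n m b (Suc i)) (m + b) m b"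

text \<open>Algorithm FractionalPower(w,f,n,m,n_f,l); fb i is the bit f_i of f.\<close>
definition FractionalPower ::
  "real \<Rightarrow> real \<Rightarrow> (nat \<Rightarrow> bool) \<Rightarrow> nat \<Rightarrow> nat \<Rightarrow> nat \<Rightarrow> nat \<Rightarrow> real" where
  "FractionalPower w f fb n m nf l =
    (let b = max n (max nf (max (nat \<lceil>5 * (real l + 2 * real m + ln (real nf))\<rceil>) 40))
     in if f = 1 then w else if f = 0 then 1 else
        foldl (\<lambda>z i. if fb i then trunc_bits b (z * pow2roots w n m b i) else z) 1 [1..<nf+1])"

end

theory Submission
  imports Defs
begin


lemma trunc_le: "trunc_bits b x \<le> x"
proof -
  have "real_of_int \<lfloor>2 ^ b * x\<rfloor> \<le> 2^b * x" by simp
  thus ?thesis unfolding trunc_bits_def by (simp add: divide_le_eq mult.commute)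
qed

lemma trunc_gt: "x - 1/2^b < trunc_bits b x"
proof -
  have "2^b * x < real_of_int \<lfloor>2 ^ b * x\<rfloor> + 1" by linarith
  hence "(2^b * x - 1) / 2^b < real_of_int \<lfloor>2 ^ b * x\<rfloor> / 2^b"
    by (simp add: divide_strict_right_mono)
  thus ?thesis unfolding trunc_bits_def by (simp add: diff_divide_distrib)
qed

lemma quad_conv:
  fixes u :: "nat \<Rightarrow> real" and c L eps U :: real
  assumes step: "\<And>k. 0 \<le> u k \<Longrightarrow> u k \<le> 1/2 \<Longrightarrow> 0 \<le> u (Suc k) \<and> u (Suc k) \<le> c * (u k)^2 + eps"
    and u0: "0 \<le> u 0" "u 0 \<le> U" and LU: "L * U \<le> 1/2"
    and cL: "0 \<le> c" "c < L" "1 \<le> L" and eps: "0 \<le> eps"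
    and t1: "L * sqrt (eps / (L - c)) \<le> 1" and t2: "sqrt (eps / (L - c)) \<le> 1/2"
  shows "0 \<le> u j \<and> u j \<le> max ((1/2)^(2^j) / L) (sqrt (eps / (L - c)))"
proof (induction j)
  case 0
  have "U \<le> (1/2) / L" using LU cL by (simp add: field_simps)
  thus ?case using u0 by simp
next
  case (Suc j)
  define t where "t = sqrt (eps / (L - c))"
  define A where "A = (1/2::real)^(2^j) / L"
  have t0: "0 \<le> t" unfolding t_def using cL eps by simp
  have tt: "t^2 = eps / (L - c)" unfolding t_def using cL eps by simp
  have A0: "0 \<le> A" unfolding A_def using cL by simp
  have "(1/2::real)^(2^j) \<le> (1/2)^1"
    by (rule power_decreasing) auto
  hence A1: "A \<le> 1/2" unfolding A_def using cL
    by (simp add: divide_le_eq)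
  have IH: "0 \<le> u j" "u j \<le> max A t" using Suc unfolding A_def t_def by auto
  have uh: "u j \<le> 1/2" using IH A1 t2 unfolding t_def by auto
  from step[OF IH(1) uh] have s1: "0 \<le> u (Suc j)" "u (Suc j) \<le> c * (u j)^2 + eps" by auto
  have pw: "(1/2::real)^(2^Suc j) = ((1/2)^(2^j))^2"
    by (simp add: power_mult[symmetric] mult.commute)
  have A2: "L * A^2 = (1/2)^(2^Suc j) / L" unfolding A_def pw using cL
    by (simp add: power2_eq_square field_simps)
  show ?case
  proof (cases "t \<le> u j")
    case True
    have "eps \<le> (L - c) * (u j)^2"
    proof -
      have "t^2 \<le> (u j)^2" using True t0 by (simp add: power_mono)
      hence "eps / (L - c) \<le> (u j)^2" using tt by simp
      thus ?thesis using cL by (simp add: field_simps)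
    qed
    hence "u (Suc j) \<le> L * (u j)^2" using s1 by (simp add: algebra_simps)
    also have "\<dots> \<le> L * (max A t)^2"
      using IH cL by (intro mult_left_mono power_mono) auto
    also have "\<dots> = max (L * A^2) (L * t^2)"
      using A0 t0 cL by (cases "A \<le> t") (auto simp: max_def intro: power_mono)
    also have "L * t^2 \<le> t"
    proof -
      have "L * t * t \<le> 1 * t" using t1 t0 unfolding t_def by (intro mult_right_mono) auto
      thus ?thesis by (simp add: power2_eq_square mult.assoc)
    qed
    hence "max (L * A^2) (L * t^2) \<le> max ((1/2)^(2^Suc j) / L) t" using A2 by auto
    finally show ?thesis using s1 unfolding t_def by simp
  next
    case False
    have "(u j)^2 \<le> t^2" using False IH by (simp add: power_mono)
    hence "u (Suc j) \<le> c * t^2 + eps" using s1 cL by (smt (verit) mult_left_mono)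
    also have "\<dots> = L * t^2" using tt cL by (simp add: field_simps)
    also have "\<dots> \<le> t"
    proof -
      have "L * t * t \<le> 1 * t" using t1 t0 unfolding t_def by (intro mult_right_mono) auto
      thus ?thesis by (simp add: power2_eq_square mult.assoc)
    qed
    finally show ?thesis using s1 unfolding t_def by simp
  qed
qed



lemma sqrt_le_half: "x \<le> 1/4 \<Longrightarrow> sqrt x \<le> 1/2"
proof -
  assume "x \<le> 1/4"
  hence "sqrt x \<le> sqrt ((1/2)^2)" by (intro real_sqrt_le_mono) (simp add: power2_eq_square)
  thus ?thesis by simp
qed

lemma ph1_step:
  assumes "0 < v"
  shows "(1 - v*x)^2 \<le> 1 - v * trunc_bits b (- v * x^2 + 2*x) \<and>
         1 - v * trunc_bits b (- v * x^2 + 2*x) < (1 - v*x)^2 + v/2^b"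
proof -
  define y where "y = - v * x^2 + 2*x"
  have e: "1 - v*y = (1 - v*x)^2" unfolding y_def by (simp add: power2_eq_square algebra_simps)
  have t1: "trunc_bits b y \<le> y" by (rule trunc_le)
  have t2: "y - 1/2^b < trunc_bits b y" by (rule trunc_gt)
  have "v * trunc_bits b y \<le> v * y" using t1 assms by (simp add: mult_left_mono)
  moreover have "v * (y - 1/2^b) < v * trunc_bits b y" using t2 assms by simp
  ultimately show ?thesis unfolding y_def[symmetric] using e by (simp add: algebra_simps)
qed

lemma ph2_step:
  assumes "0 < a"
  shows "(1 - sqrt a * y)^2 * (3 - (1 - sqrt a * y)) / 2 \<le> 1 - sqrt a * trunc_bits b ((3*y - a*y^3)/2) \<and>
         1 - sqrt a * trunc_bits b ((3*y - a*y^3)/2) < (1 - sqrt a * y)^2 * (3 - (1 - sqrt a * y)) / 2 + sqrt a/2^b"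
proof -
  define Y where "Y = (3*y - a*y^3)/2"
  have sa: "sqrt a ^2 = a" using assms by simp
  have c: "sqrt a * sqrt a = a" using assms by simp
  have r3: "(sqrt a*y)^3 = (sqrt a*sqrt a)*sqrt a*y^3" by (simp add: power3_eq_cube algebra_simps)
  have "sqrt a * Y = (3*(sqrt a*y) - (sqrt a*y)^3)/2" unfolding Y_def r3 c by (simp add: algebra_simps)
  moreover have "\<And>r::real. 1 - (3*r - r^3)/2 = (1-r)^2*(3-(1-r))/2"
    by (simp add: power2_eq_square power3_eq_cube field_simps)
  ultimately have e: "1 - sqrt a * Y = (1 - sqrt a * y)^2 * (3 - (1 - sqrt a * y)) / 2"
    by metis
  have t1: "trunc_bits b Y \<le> Y" by (rule trunc_le)
  have t2: "Y - 1/2^b < trunc_bits b Y" by (rule trunc_gt)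
  have sp: "0 < sqrt a" using assms by simp
  have "sqrt a * trunc_bits b Y \<le> sqrt a * Y" using t1 sp by (simp add: mult_left_mono)
  moreover have "sqrt a * (Y - 1/2^b) < sqrt a * trunc_bits b Y" using t2 sp by simp
  moreover have "sqrt a * (Y - 1/2^b) = sqrt a * Y - sqrt a/2^b" by (simp add: algebra_simps)
  ultimately show ?thesis unfolding Y_def[symmetric] e[symmetric] by linarith
qed

lemma phase1:
  fixes v x0 :: real and b s :: nat
  defines "g \<equiv> (\<lambda>x. trunc_bits b (- v * x^2 + 2*x))"
  assumes v: "0 < v" and e0: "0 \<le> 1 - v*x0" "1 - v*x0 \<le> 1/2" and eps: "v/2^b \<le> 1/1000" and s: "1 \<le> s"
  shows "0 \<le> 1 - v * (g^^s) x0 \<and> 1 - v * (g^^s) x0 \<le> max ((1/2)^(2^(s-1))) (sqrt (2 * (v/2^b)))"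
proof -
  define \<epsilon> where "\<epsilon> = v/2^b"
  define u where "u = (\<lambda>k. 1 - v * (g^^(Suc k)) x0)"
  have st: "\<And>x. (1 - v*x)^2 \<le> 1 - v * g x \<and> 1 - v * g x < (1 - v*x)^2 + \<epsilon>"
    unfolding g_def \<epsilon>_def using ph1_step[OF v] by blast
  have e0: "0 \<le> \<epsilon>" unfolding \<epsilon>_def using v by simp
  have step: "0 \<le> u (Suc k) \<and> u (Suc k) \<le> 1 * (u k)^2 + \<epsilon>" for k
  proof -
    have uS: "u (Suc k) = 1 - v * g ((g^^Suc k) x0)" unfolding u_def by simp
    have uk: "u k = 1 - v * (g^^Suc k) x0" unfolding u_def by simp
    have "0 \<le> (u k)^2" by simp
    thus ?thesis using st[of "(g^^(Suc k)) x0"] unfolding uS uk by linarith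
  qed
  have "(1 - v*x0)^2 \<le> (1/2)^2" using e0 assms by (intro power_mono) auto
  hence "(1 - v*x0)^2 \<le> 1/4" by (simp add: power_divide)
  moreover have "0 \<le> (1 - v*x0)^2" by simp
  moreover have "u 0 = 1 - v * g x0" unfolding u_def by simp
  ultimately have u0: "0 \<le> u 0" "u 0 \<le> 1/4 + \<epsilon>" using st[of x0]
    by linarith+
  have sq: "sqrt (\<epsilon> / (3/2 - 1)) = sqrt (2*\<epsilon>)" by simp
  have epsb: "\<epsilon> \<le> 1/1000" using eps unfolding \<epsilon>_def .
  have sh: "sqrt (2*\<epsilon>) \<le> 1/2" using epsb by (intro sqrt_le_half) linarith
  have "0 \<le> u (s-1) \<and> u (s-1) \<le> max ((1/2)^(2^(s-1)) / (3/2)) (sqrt (\<epsilon> / (3/2 - 1)))"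
  proof (rule quad_conv[where u=u and c=1 and U="1/4 + \<epsilon>" and L="3/2" and eps=\<epsilon> and j="s-1", OF _ u0])
    show "3 / 2 * sqrt (\<epsilon> / (3 / 2 - 1)) \<le> 1" using sh unfolding sq by linarith
    show "sqrt (\<epsilon> / (3 / 2 - 1)) \<le> 1/2" using sh unfolding sq by linarith
    show "3 / 2 * (1 / 4 + \<epsilon>) \<le> 1 / 2" using epsb by (simp add: field_simps)
  qed (use step e0 in auto)
  moreover have "u (s-1) = 1 - v * (g^^s) x0" unfolding u_def using s by simp
  moreover have "max ((1/2::real)^(2^(s-1)) / (3/2)) (sqrt (2*\<epsilon>)) \<le> max ((1/2)^(2^(s-1))) (sqrt (2 * \<epsilon>))"
    by (rule max.mono) auto
  ultimately have "0 \<le> 1 - v * (g^^s) x0 \<and> 1 - v * (g^^s) x0 \<le> max ((1/2)^(2^(s-1))) (sqrt (2 * \<epsilon>))"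
    unfolding sq by linarith
  thus ?thesis unfolding \<epsilon>_def .
qed

lemma phi_bounds:
  fixes d :: real assumes "0 \<le> d" "d \<le> 1/2"
  shows "0 \<le> d^2*(3-d)/2 \<and> d^2*(3-d)/2 \<le> 3/2 * d^2 \<and> d^2*(3-d)/2 \<le> 5/16"
proof -
  have a: "0 \<le> d^2*(3-d)/2" using assms by simp
  have b: "d^2*(3-d)/2 \<le> 3/2 * d^2" using assms by (simp add: algebra_simps)
  have "0 \<le> (1/2 - d) * (5/4 + 5*d/2 - d^2)"
  proof (rule mult_nonneg_nonneg)
    have "d^2 \<le> (1/2)^2" using assms by (intro power_mono) auto
    thus "0 \<le> 5/4 + 5*d/2 - d^2" using assms by (simp add: power_divide)
  qed (use assms in auto)
  moreover have "(1/2 - d) * (5/4 + 5*d/2 - d^2) = 5/8 - d^2*(3-d)"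
    by (simp add: power2_eq_square field_simps)
  ultimately have "d^2*(3-d)/2 \<le> 5/16" by linarith
  with a b show ?thesis by blast
qed

lemma phase2:
  fixes a y0 :: real and b s :: nat
  defines "h \<equiv> (\<lambda>y. trunc_bits b ((3*y - a*y^3)/2))"
  assumes a: "0 < a" and d0: "0 \<le> 1 - sqrt a * y0" "1 - sqrt a * y0 \<le> 1/2"
    and eps: "sqrt a/2^b \<le> 1/1000" and s: "1 \<le> s"
  shows "0 \<le> 1 - sqrt a * (h^^s) y0 \<and> 1 - sqrt a * (h^^s) y0 \<le> max ((1/2)^(2^(s-1))) (sqrt (20 * (sqrt a/2^b)))"
proof -
  define \<epsilon> where "\<epsilon> = sqrt a/2^b"
  define u where "u = (\<lambda>k. 1 - sqrt a * (h^^(Suc k)) y0)"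
  have st: "\<And>y. (1 - sqrt a * y)^2 * (3 - (1 - sqrt a * y)) / 2 \<le> 1 - sqrt a * h y \<and>
      1 - sqrt a * h y < (1 - sqrt a * y)^2 * (3 - (1 - sqrt a * y)) / 2 + \<epsilon>"
    unfolding h_def \<epsilon>_def using ph2_step[OF a] by blast
  have e0: "0 \<le> \<epsilon>" unfolding \<epsilon>_def using a by simp
  have step: "0 \<le> u (Suc k) \<and> u (Suc k) \<le> 3/2 * (u k)^2 + \<epsilon>" if "0 \<le> u k" "u k \<le> 1/2" for k
  proof -
    have uS: "u (Suc k) = 1 - sqrt a * h ((h^^Suc k) y0)" unfolding u_def by simp
    have uk: "u k = 1 - sqrt a * (h^^Suc k) y0" unfolding u_def by simp
    have "0 \<le> (u k)^2*(3-u k)/2 \<and> (u k)^2*(3-u k)/2 \<le> 3/2 * (u k)^2"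
      using phi_bounds[OF that] by blast
    thus ?thesis using st[of "(h^^(Suc k)) y0"] unfolding uS uk by linarith
  qed
  have "u 0 = 1 - sqrt a * h y0" unfolding u_def by simp
  moreover have "0 \<le> (1 - sqrt a*y0)^2*(3-(1 - sqrt a*y0))/2 \<and> (1 - sqrt a*y0)^2*(3-(1 - sqrt a*y0))/2 \<le> 5/16"
    using phi_bounds[OF d0] by blast
  ultimately have u0: "0 \<le> u 0" "u 0 \<le> 5/16 + \<epsilon>" using st[of y0]
    by linarith+
  have sq: "sqrt (\<epsilon> / (31/20 - 3/2)) = sqrt (20*\<epsilon>)" by simp
  have epsb: "\<epsilon> \<le> 1/1000" using eps unfolding \<epsilon>_def .
  have sh: "sqrt (20*\<epsilon>) \<le> 1/2" using epsb by (intro sqrt_le_half) linarith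
  have "0 \<le> u (s-1) \<and> u (s-1) \<le> max ((1/2)^(2^(s-1)) / (31/20)) (sqrt (\<epsilon> / (31/20 - 3/2)))"
  proof (rule quad_conv[where u=u and c="3/2" and U="5/16 + \<epsilon>" and L="31/20" and eps=\<epsilon> and j="s-1", OF _ u0])
    show "31/20 * sqrt (\<epsilon> / (31/20 - 3/2)) \<le> 1" using sh unfolding sq by linarith
    show "sqrt (\<epsilon> / (31/20 - 3/2)) \<le> 1/2" using sh unfolding sq by linarith
    show "31/20 * (5/16 + \<epsilon>) \<le> 1 / 2" using epsb by (simp add: field_simps)
  qed (use step e0 in auto)
  moreover have "u (s-1) = 1 - sqrt a * (h^^s) y0" unfolding u_def using s by simp
  moreover have "max ((1/2::real)^(2^(s-1)) / (31/20)) (sqrt (20*\<epsilon>)) \<le> max ((1/2)^(2^(s-1))) (sqrt (20 * \<epsilon>))"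
    by (rule max.mono) auto
  ultimately have "0 \<le> 1 - sqrt a * (h^^s) y0 \<and> 1 - sqrt a * (h^^s) y0 \<le> max ((1/2)^(2^(s-1))) (sqrt (20 * \<epsilon>))"
    unfolding sq by linarith
  thus ?thesis unfolding \<epsilon>_def .
qed



lemma ln1m: "0 \<le> x \<Longrightarrow> x \<le> 1/2 \<Longrightarrow> \<bar>ln (1 - x)\<bar> \<le> 2 * (x::real)"
proof -
  assume a: "0 \<le> x" "x \<le> 1/2"
  have "- x - 2 * x\<^sup>2 \<le> ln (1 - x)" by (rule ln_one_minus_pos_lower_bound[OF a])
  moreover have "x^2 \<le> x * (1/2)" using mult_left_mono[OF a(2) a(1)] by (simp add: power2_eq_square)
  moreover have "ln (1 - x) \<le> 0" using a by simp
  ultimately show ?thesis by linarith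
qed

lemma s_facts:
  assumes "40 \<le> b"
  shows "1 \<le> nat \<lceil>log 2 (real b)\<rceil> \<and> b \<le> 2 ^ nat \<lceil>log 2 (real b)\<rceil>"
proof -
  define s where "s = nat \<lceil>log 2 (real b)\<rceil>"
  have bp: "0 < real b" using assms by simp
  have l1: "1 \<le> log 2 (real b)" using assms by (simp add: le_log_iff)
  hence s1: "real s = of_int \<lceil>log 2 (real b)\<rceil>" unfolding s_def by simp
  have "log 2 (real b) \<le> real s" unfolding s1 by simp
  hence "2 powr log 2 (real b) \<le> 2 powr real s" by simp
  hence "real b \<le> 2 ^ s" using bp by (simp add: powr_realpow)
  hence "b \<le> 2^s" by (metis of_nat_le_iff of_nat_numeral of_nat_power)
  moreover have "1 \<le> s" unfolding s_def using l1 by linarith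
  ultimately show ?thesis unfolding s_def by blast
qed

lemma half_pow_le:
  assumes "b \<le> 2^s" "1 \<le> s"
  shows "(1/2::real)^(2^(s-1)) \<le> sqrt (1/2^b)"
proof (rule real_le_rsqrt)
  have "((1/2::real)^(2^(s-1)))^2 = (1/2)^(2^s)"
    using assms(2) by (simp add: power_mult[symmetric] power_Suc[symmetric] mult.commute)
  also have "\<dots> \<le> (1/2)^b" by (rule power_decreasing) (use assms in auto)
  finally show "((1/2::real)^(2^(s-1)))^2 \<le> 1/2^b" by (simp add: power_divide)
qed

lemma SQRT_bound:
  fixes v V :: real and b :: nat
  assumes v: "1/2 \<le> v" "v \<le> V" and b: "40 \<le> b" and V: "V/2^b \<le> 1/1000"
  shows "0 < SQRT v n' m' b \<and> \<bar>ln (SQRT v n' m' b) - ln v / 2\<bar> \<le> (15 + sqrt (2*V)) * sqrt (1/2^b)"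
proof (cases "v = 1")
  case True
  have "0 \<le> (15 + sqrt (2*V)) * sqrt (1/2^b)" using v by simp
  thus ?thesis using True unfolding SQRT_def by simp
next
  case False
  define \<beta> where "\<beta> = sqrt (1/2^b :: real)"
  have \<beta>0: "0 \<le> \<beta>" unfolding \<beta>_def by simp
  define p where "p = (LEAST p::nat. v < 2 ^ p)"
  define g where "g = (\<lambda>x. trunc_bits b (- v * x^2 + 2*x))"
  define s where "s = nat \<lceil>log 2 (real b)\<rceil>"
  define x0 where "x0 = (2::real) powi (- int p)"
  define xs where "xs = (g ^^ s) x0"
  define q where "q = (LEAST q::nat. xs \<ge> 2 powi (- int q))"
  define h where "h = (\<lambda>y. trunc_bits b ((3*y - xs*y^3)/2))"
  define y0 where "y0 = (2::real) powi ((int q - 1) div 2)"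
  have S: "SQRT v n' m' b = (h^^s) y0"
    using False unfolding SQRT_def Let_def h_def y0_def q_def xs_def x0_def g_def s_def p_def by (simp only: if_False)
  have sf: "1 \<le> s" "b \<le> 2^s" using s_facts[OF b] unfolding s_def by auto
  have vp: "0 < v" using v by simp
  have bb: "(2::real)^40 \<le> 2^b" using b by (intro power_increasing) auto
  have "\<exists>p::nat. v < 2^p" using real_arch_pow[of 2 v] by auto
  hence p0: "v < 2^p" unfolding p_def by (rule LeastI_ex)
  have p1: "2^(p-1) \<le> v" if "0 < p"
  proof -
    have "\<not> v < 2^(p-1)" unfolding p_def by (rule not_less_Least) (use that p_def in auto)
    thus ?thesis by simp
  qed
  have x0e: "x0 = 1/2^p" unfolding x0_def by (simp add: power_int_minus_divide)
  have vx0: "v*x0 = v/2^p" unfolding x0e by simp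
  have e0: "0 \<le> 1 - v*x0" "1 - v*x0 \<le> 1/2"
  proof -
    have "v/2^p < 1" using p0 by (simp add: divide_less_eq)
    thus "0 \<le> 1 - v*x0" unfolding vx0 by linarith
    show "1 - v*x0 \<le> 1/2"
    proof (cases "p = 0")
      case True thus ?thesis using v unfolding vx0 by simp
    next
      case False
      have "(2::real)^p = 2^(Suc (p-1))" using False by simp
      also have "\<dots> = 2 * 2^(p-1)" by simp
      finally have "2^p \<le> 2 * v" using p1 False by simp
      hence "1/2 \<le> v/2^p" by (simp add: le_divide_eq)
      thus ?thesis unfolding vx0 by linarith
    qed
  qed
  have "v/2^b \<le> V/2^b" by (rule divide_right_mono[OF v(2)]) simp
  hence eps1: "v/2^b \<le> 1/1000" using V by linarith
  define e where "e = 1 - v * xs"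
  have ebd: "0 \<le> e" "e \<le> max ((1/2)^(2^(s-1))) (sqrt (2 * (v/2^b)))"
    using phase1[OF vp e0 eps1 sf(1)] unfolding e_def xs_def g_def by auto
  have half1: "(1/2::real)^(2^(s-1)) \<le> 1/2"
    using power_decreasing[of 1 "2^(s-1)" "1/2::real"] by simp
  have sq1: "sqrt (2 * (v/2^b)) \<le> 1/2" using eps1 by (intro sqrt_le_half) linarith
  have ehalf: "e \<le> 1/2" using ebd half1 sq1 by linarith
  have xse: "xs = (1-e)/v" unfolding e_def using vp by (simp add: field_simps)
  have xsp: "0 < xs" unfolding xse using vp ehalf by simp
  have "(1-e)/v \<le> 1/v" using ebd vp by (simp add: divide_right_mono)
  also have "1/v \<le> 2" using v by (simp add: divide_le_eq)
  finally have xs2: "xs \<le> 2" unfolding xse .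
  have pw: "\<And>k. (2::real) powi (- int k) = 1/2^k" by (simp add: power_int_minus_divide)
  have "\<exists>q::nat. 2 powi (- int q) \<le> xs"
  proof -
    obtain k where "(1/2::real)^k < xs" using real_arch_pow_inv[OF xsp, of "1/2"] by auto
    thus ?thesis unfolding pw by (intro exI[of _ k]) (simp add: power_divide)
  qed
  hence "2 powi (- int q) \<le> xs" unfolding q_def by (rule LeastI_ex)
  hence q0: "1/2^q \<le> xs" unfolding pw .
  have q1: "xs < 1/2^(q-1)" if "0 < q"
  proof -
    have "\<not> 2 powi (- int (q-1)) \<le> xs" unfolding q_def by (rule not_less_Least) (use that q_def in auto)
    thus ?thesis unfolding pw by simp
  qed
  have y0b: "0 < y0 \<and> 1/4 \<le> xs * y0^2 \<and> xs * y0^2 \<le> 1"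
  proof (cases "q = 0")
    case True
    have y: "y0 = 1/2" unfolding y0_def True by simp
    show ?thesis unfolding y using q0 xs2 True by (simp add: power2_eq_square)
  next
    case False
    define j where "j = (q-1) div 2"
    have "(int q - 1) div 2 = int j" unfolding j_def using False by (simp add: zdiv_int of_nat_diff)
    hence y0j: "y0 = 2^j" unfolding y0_def by simp
    have y0p: "0 < y0^2" unfolding y0j by simp
    have qa: "1/2^q \<le> xs" "xs < 1/2^(q-1)" using q0 q1 False by auto
    have "(2::real)^q = 2^(Suc (q-1))" using False by simp
    hence q2: "(2::real)^q = 2 * 2^(q-1)" by simp
    show ?thesis
    proof (cases "even (q-1)")
      case True
      hence "q - 1 = 2*j" unfolding j_def by simp
      hence yq: "y0^2 = 2^(q-1)" unfolding y0j by (simp add: power_mult[symmetric] mult.commute)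
      have "1/2 \<le> xs * y0^2" using qa(1) unfolding yq q2 by (simp add: field_simps)
      moreover have "xs * y0^2 < 1" using qa(2) unfolding yq by (simp add: field_simps)
      ultimately show ?thesis unfolding y0j by simp
    next
      case False
      hence "q - 1 = 2*j + 1" unfolding j_def by presburger
      hence yq: "2^(q-1) = 2 * y0^2" unfolding y0j by (simp add: power_mult[symmetric] mult.commute)
      have "1/4 \<le> xs * y0^2" using qa(1) y0p unfolding q2 yq by (simp add: field_simps)
      moreover have "xs * y0^2 < 1/2" using qa(2) y0p unfolding yq by (simp add: field_simps)
      ultimately show ?thesis unfolding y0j by simp
    qed
  qed
  have ry: "sqrt xs * y0 = sqrt (xs * y0^2)" using y0b by (simp add: real_sqrt_mult)
  have "sqrt (1/4) \<le> sqrt (xs * y0^2)" using y0b by (intro real_sqrt_le_mono) auto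
  moreover have "sqrt (1/4::real) = 1/2" by (simp add: real_sqrt_divide)
  ultimately have r0: "1/2 \<le> sqrt xs * y0" "sqrt xs * y0 \<le> 1" using y0b unfolding ry by auto
  have d0: "0 \<le> 1 - sqrt xs * y0" "1 - sqrt xs * y0 \<le> 1/2" using r0 by auto
  have sx2: "sqrt xs \<le> 2"
  proof -
    have "sqrt xs \<le> sqrt (2^2)" by (rule real_sqrt_le_mono) (use xs2 in simp)
    thus ?thesis by simp
  qed
  have eps2: "sqrt xs/2^b \<le> 1/1000"
  proof -
    have "sqrt xs/2^b \<le> 2/2^b" using sx2 by (simp add: divide_right_mono)
    also have "\<dots> \<le> 2/2^40" using bb by (simp add: frac_le)
    also have "(2::real)/2^40 \<le> 1/1000" by simp
    finally show ?thesis .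
  qed
  define d where "d = 1 - sqrt xs * (h^^s) y0"
  have dbd: "0 \<le> d" "d \<le> max ((1/2)^(2^(s-1))) (sqrt (20 * (sqrt xs/2^b)))"
    using phase2[OF xsp d0 eps2 sf(1)] unfolding d_def h_def by auto
  have "20 * (sqrt xs/2^b) \<le> 1/4" using eps2 by linarith
  hence "sqrt (20 * (sqrt xs/2^b)) \<le> 1/2" by (rule sqrt_le_half)
  hence dhalf: "d \<le> 1/2" using dbd half1 by linarith
  define Y where "Y = (h^^s) y0"
  have sxp: "0 < sqrt xs" using xsp by simp
  have Ye: "Y = (1-d)/sqrt xs" unfolding d_def Y_def using sxp by (simp add: field_simps)
  have Yp: "0 < Y" unfolding Ye using dhalf sxp by simp
  have lnY: "ln Y = ln (1-d) - ln xs / 2"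
    unfolding Ye using dhalf sxp xsp by (simp add: ln_div ln_sqrt)
  have lnxs: "ln xs = ln (1-e) - ln v" unfolding xse using ehalf vp by (simp add: ln_div)
  have diff: "ln Y - ln v / 2 = ln (1-d) - ln (1-e) / 2" unfolding lnY lnxs by (simp add: field_simps)
  have "\<bar>ln (1-d)\<bar> \<le> 2*d" by (rule ln1m) (use dbd dhalf in auto)
  moreover have "\<bar>ln (1-e)\<bar> \<le> 2*e" by (rule ln1m) (use ebd ehalf in auto)
  ultimately have lb: "\<bar>ln Y - ln v / 2\<bar> \<le> 2*d + e" unfolding diff by linarith
  have hb: "(1/2::real)^(2^(s-1)) \<le> \<beta>" unfolding \<beta>_def by (rule half_pow_le[OF sf(2) sf(1)])
  have "sqrt (20 * (sqrt xs/2^b)) \<le> sqrt (40 * (1/2^b))"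
    by (rule real_sqrt_le_mono) (use sx2 in \<open>simp add: divide_right_mono\<close>)
  also have "\<dots> = sqrt 40 * \<beta>" unfolding \<beta>_def by (rule real_sqrt_mult)
  also have "sqrt 40 \<le> (7::real)"
  proof -
    have "sqrt 40 \<le> sqrt ((7::real)^2)" by (rule real_sqrt_le_mono) simp
    thus ?thesis by simp
  qed
  hence "sqrt 40 * \<beta> \<le> 7 * \<beta>" using \<beta>0 by (simp add: mult_right_mono)
  finally have "sqrt (20 * (sqrt xs/2^b)) \<le> 7 * \<beta>" .
  hence "max ((1/2)^(2^(s-1))) (sqrt (20 * (sqrt xs/2^b))) \<le> 7 * \<beta>"
    using hb \<beta>0 by (intro max.boundedI) linarith+
  hence d7: "d \<le> 7 * \<beta>" using dbd by linarith
  have "sqrt (2 * (v/2^b)) \<le> sqrt (2*V * (1/2^b))"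
    by (rule real_sqrt_le_mono) (use v in \<open>simp add: divide_right_mono\<close>)
  also have "\<dots> = sqrt (2*V) * \<beta>" unfolding \<beta>_def by (rule real_sqrt_mult)
  finally have "sqrt (2 * (v/2^b)) \<le> sqrt (2*V) * \<beta>" .
  moreover have "0 \<le> sqrt (2*V) * \<beta>" using \<beta>0 v by simp
  ultimately have "max ((1/2)^(2^(s-1))) (sqrt (2 * (v/2^b))) \<le> \<beta> + sqrt (2*V) * \<beta>"
    using hb \<beta>0 by (intro max.boundedI) linarith+
  hence eb: "e \<le> \<beta> + sqrt (2*V) * \<beta>" using ebd by linarith
  have "\<bar>ln Y - ln v / 2\<bar> \<le> (15 + sqrt (2*V)) * \<beta>" using lb d7 eb by (simp add: algebra_simps)
  thus ?thesis using Yp unfolding S Y_def[symmetric] \<beta>_def by simp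
qed



lemma SQRT_irrel: "SQRT x n1 m1 b = SQRT x n2 m2 b"
  unfolding SQRT_def by simp

lemma pow2roots_Suc: "pow2roots w n m b (Suc i) = SQRT (pow2roots w n m b i) 0 0 b"
proof (cases i)
  case 0 thus ?thesis using SQRT_irrel[of w n m b 0 0] by simp
next
  case (Suc j) thus ?thesis using SQRT_irrel[of "pow2roots w n m b (Suc j)" "m+b" m b 0 0] by simp
qed

lemma tri_half: fixes a b c :: real shows "\<bar>a - c/2\<bar> \<le> \<bar>a - b/2\<bar> + \<bar>b - c\<bar>/2"
proof -
  have "a - c/2 = (a - b/2) + (b - c)/2" by (simp add: field_simps)
  hence "\<bar>a - c/2\<bar> \<le> \<bar>a - b/2\<bar> + \<bar>(b-c)/2\<bar>" by (metis abs_triangle_ineq)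
  thus ?thesis by simp
qed

lemma ln2_half: "1/2 \<le> ln (2::real)"
proof -
  have "exp (1/2::real) \<le> 1 + 2 * (1/2)" by (rule real_exp_bound_lemma) auto
  thus ?thesis by (subst ln_ge_iff) auto
qed

lemma roots_log:
  fixes w \<eta> :: real
  assumes w: "1 < w" "w < 2^m" and b: "40 \<le> b" and V: "2^(m+1)/2^b \<le> (1/1000::real)"
    and eta: "4*\<eta> \<le> 1" and eta_def: "\<eta> = (15 + sqrt (2*2^(m+1))) * sqrt (1/2^b)"
  shows "0 < pow2roots w n m b i \<and> \<bar>ln (pow2roots w n m b i) - ln w / 2^i\<bar> \<le> 2*\<eta>"
proof (induction i)
  case 0
  have "0 \<le> \<eta>" unfolding eta_def by simp
  thus ?case using w by simp
next
  case (Suc i)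
  define x where "x = pow2roots w n m b i"
  have xp: "0 < x" and xl: "\<bar>ln x - ln w / 2^i\<bar> \<le> 2*\<eta>" using Suc unfolding x_def by auto
  have lw: "0 \<le> ln w" using w by simp
  have lw2: "ln w < m * ln 2"
  proof -
    have "ln w < ln (2^m)" using w by simp
    thus ?thesis by (simp add: ln_realpow)
  qed
  have "1 \<le> (2::real)^i" by simp
  hence "ln w * 1 \<le> ln w * 2^i" using lw by (intro mult_left_mono) auto
  hence "ln w / 2^i \<le> ln w" by (simp add: divide_le_eq)
  moreover have "0 \<le> ln w / 2^i" using lw by simp
  moreover have "2*\<eta> \<le> ln 2" using eta ln2_half by linarith
  ultimately have lx: "- ln 2 \<le> ln x" "ln x \<le> (real m+1) * ln 2" using xl lw2
    by (simp_all add: abs_le_iff algebra_simps)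
  have "ln (1/2::real) = - ln 2" by (simp add: ln_div)
  hence "ln (1/2) \<le> ln x" using lx by linarith
  hence x1: "1/2 \<le> x" using xp by (subst (asm) ln_le_cancel_iff) auto
  have "ln ((2::real)^(m+1)) = real (m+1) * ln 2" by (rule ln_realpow)
  hence "ln x \<le> ln ((2::real)^(m+1))" using lx by (simp add: add.commute)
  hence x2: "x \<le> 2^(m+1)" using xp by (subst (asm) ln_le_cancel_iff) auto
  have sb: "0 < SQRT x 0 0 b \<and> \<bar>ln (SQRT x 0 0 b) - ln x / 2\<bar> \<le> \<eta>"
    using SQRT_bound[OF x1 x2 b V, of 0 0] unfolding eta_def by simp
  have eq: "ln w / 2^Suc i = (ln w / 2^i)/2" by simp
  have "\<bar>ln (SQRT x 0 0 b) - ln w / 2^Suc i\<bar> \<le> \<bar>ln (SQRT x 0 0 b) - ln x / 2\<bar> + \<bar>ln x - ln w / 2^i\<bar>/2"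
    unfolding eq by (rule tri_half)
  moreover have "\<bar>ln x - ln w / 2^i\<bar>/2 \<le> \<eta>" using xl by simp
  ultimately have "\<bar>ln (SQRT x 0 0 b) - ln w / 2^Suc i\<bar> \<le> \<eta> + \<eta>"
    using add_mono[OF conjunct2[OF sb]] order.trans by blast
  hence "\<bar>ln (SQRT x 0 0 b) - ln w / 2^Suc i\<bar> \<le> 2*\<eta>" by simp
  thus ?case using sb unfolding pow2roots_Suc x_def[symmetric] by simp
qed



lemma exp_err: fixes L :: real assumes "\<bar>L\<bar> \<le> 1/2" shows "\<bar>exp L - 1\<bar> \<le> 2 * \<bar>L\<bar>"
proof (cases "0 \<le> L")
  case True
  have "exp L \<le> 1 + 2*L" by (rule real_exp_bound_lemma) (use True assms in auto)
  moreover have "1 \<le> exp L" using True by simp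
  ultimately show ?thesis using True by simp
next
  case False
  have "1 + L \<le> exp L" by (rule exp_ge_add_one_self)
  moreover have "exp L \<le> 1" using False by simp
  moreover have "\<bar>exp L - 1\<bar> = 1 - exp L" using calculation(2) by simp
  ultimately show ?thesis using False by linarith
qed

lemma ratio_err:
  fixes W \<rho> lam :: real
  assumes "0 < W" "0 < \<rho>" "\<bar>ln W - ln \<rho>\<bar> \<le> lam" "lam \<le> 1/2"
  shows "\<bar>W - \<rho>\<bar> \<le> \<rho> * (2*lam)"
proof -
  define L where "L = ln W - ln \<rho>"
  have W: "W = \<rho> * exp L" unfolding L_def using assms by (simp add: exp_diff)
  have "\<bar>exp L - 1\<bar> \<le> 2*\<bar>L\<bar>" by (rule exp_err) (use assms in \<open>simp add: L_def\<close>)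
  also have "\<dots> \<le> 2*lam" using assms unfolding L_def by simp
  finally have "\<rho> * \<bar>exp L - 1\<bar> \<le> \<rho> * (2*lam)" using assms by (simp add: mult_left_mono)
  moreover have "\<rho> * exp L - \<rho> = \<rho> * (exp L - 1)" by (simp add: algebra_simps)
  hence "\<bar>W - \<rho>\<bar> = \<rho> * \<bar>exp L - 1\<bar>" unfolding W using assms by (simp add: abs_mult)
  ultimately show ?thesis by simp
qed

lemma foldl_Suc:
  "foldl F z [1..<Suc k + 1] = F (foldl F z [1..<k+1]) (Suc k)"
  by simp

lemma prod_err:
  fixes Wf \<rho> P :: "nat \<Rightarrow> real" and fb :: "nat \<Rightarrow> bool" and \<theta> :: real
  assumes \<rho>1: "\<And>i. 1 \<le> \<rho> i" and Wpos: "\<And>i. 0 \<le> Wf i"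
    and Werr: "\<And>i. \<bar>Wf i - \<rho> i\<bar> \<le> \<rho> i * \<theta>" and \<theta>: "0 \<le> \<theta>"
    and P0: "P 0 = 1" and PS: "\<And>k. P (Suc k) = (if fb (Suc k) then P k * \<rho> (Suc k) else P k)"
  shows "1 \<le> P k \<and> \<bar>foldl (\<lambda>z i. if fb i then trunc_bits b (z * Wf i) else z) 1 [1..<k+1] - P k\<bar>
           \<le> P k * (k * (\<theta> + 1/2^b) * (1+\<theta>)^k)"
proof (induction k)
  case 0
  thus ?case using P0 by simp
next
  case (Suc k)
  define F where "F = (\<lambda>z i. if fb i then trunc_bits b (z * Wf i) else z)"
  define Z where "Z = foldl F 1 [1..<k+1]"
  define \<delta> where "\<delta> = (1::real)/2^b"
  define R where "R = k * (\<theta> + \<delta>) * (1+\<theta>)^k"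
  have IH: "1 \<le> P k" "\<bar>Z - P k\<bar> \<le> P k * R" using Suc unfolding Z_def F_def R_def \<delta>_def by auto
  have ZS: "foldl F 1 [1..<Suc k+1] = F Z (Suc k)" unfolding Z_def by (rule foldl_Suc)
  have \<delta>0: "0 \<le> \<delta>" unfolding \<delta>_def by simp
  have R0: "0 \<le> R" unfolding R_def using \<theta> \<delta>0 by simp
  have pw1: "1 \<le> (1+\<theta>)^(Suc k)" by (rule one_le_power) (use \<theta> in simp)
  have RS: "R * (1+\<theta>) + \<theta> + \<delta> \<le> Suc k * (\<theta> + \<delta>) * (1+\<theta>)^Suc k"
  proof -
    have "\<theta> + \<delta> \<le> (\<theta> + \<delta>) * (1+\<theta>)^Suc k" using pw1 \<theta> \<delta>0
      by (metis mult_left_mono mult.right_neutral add_nonneg_nonneg)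
    thus ?thesis unfolding R_def by (simp add: algebra_simps)
  qed
  show ?case
  proof (cases "fb (Suc k)")
    case False
    have "0 \<le> R * \<theta>" using R0 \<theta> by simp
    hence "R \<le> Suc k * (\<theta> + \<delta>) * (1+\<theta>)^Suc k" using RS \<theta> \<delta>0 by (simp add: algebra_simps)
    hence "P k * R \<le> P k * (Suc k * (\<theta> + \<delta>) * (1+\<theta>)^Suc k)"
      using IH(1) by (intro mult_left_mono) auto
    hence "\<bar>Z - P k\<bar> \<le> P k * (Suc k * (\<theta> + \<delta>) * (1+\<theta>)^Suc k)" using IH(2) by linarith
    thus ?thesis using IH False unfolding PS ZS[unfolded F_def] F_def \<delta>_def[symmetric] by simp
  next
    case True
    define W where "W = Wf (Suc k)"
    define r where "r = \<rho> (Suc k)"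
    have r1: "1 \<le> r" unfolding r_def by (rule \<rho>1)
    have W0: "0 \<le> W" unfolding W_def by (rule Wpos)
    have We: "\<bar>W - r\<bar> \<le> r * \<theta>" unfolding W_def r_def by (rule Werr)
    have Wle: "W \<le> r * (1+\<theta>)" using We by (simp add: algebra_simps abs_le_iff)
    have Pr1: "1 \<le> P k * r" using IH(1) r1 by (metis mult_mono one_le_numeral order.trans mult_1_left zero_le_one)
    have tr: "\<bar>trunc_bits b (Z * W) - Z * W\<bar> \<le> \<delta>"
      using trunc_le[of b "Z*W"] trunc_gt[of "Z*W" b] unfolding \<delta>_def by simp
    have "\<bar>Z * W - P k * r\<bar> = \<bar>(Z - P k) * W + P k * (W - r)\<bar>" by (simp add: algebra_simps)
    also have "\<dots> \<le> \<bar>Z - P k\<bar> * W + P k * \<bar>W - r\<bar>"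
      using W0 IH(1) by (simp add: abs_mult abs_triangle_ineq order.trans[OF abs_triangle_ineq])
    also have "\<dots> \<le> (P k * R) * (r * (1+\<theta>)) + P k * (r * \<theta>)"
      using IH W0 Wle We R0 \<theta> by (intro add_mono mult_mono mult_left_mono) auto
    finally have e1: "\<bar>Z * W - P k * r\<bar> \<le> (P k * r) * (R*(1+\<theta>) + \<theta>)" by (simp add: algebra_simps)
    have "\<bar>trunc_bits b (Z * W) - P k * r\<bar> \<le> \<delta> + (P k * r) * (R*(1+\<theta>) + \<theta>)"
      using tr e1 by linarith
    also have "\<delta> \<le> (P k * r) * \<delta>" using Pr1 \<delta>0 by (simp add: mult_le_cancel_right1)
    hence "\<delta> + (P k * r) * (R*(1+\<theta>) + \<theta>) \<le> (P k * r) * (R*(1+\<theta>) + \<theta> + \<delta>)"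
      by (simp add: algebra_simps)
    also have "\<dots> \<le> (P k * r) * (Suc k * (\<theta> + \<delta>) * (1+\<theta>)^Suc k)"
      using RS Pr1 by (intro mult_left_mono) auto
    finally have fin: "\<bar>trunc_bits b (Z * W) - P k * r\<bar> \<le> P k * r * (real (Suc k) * (\<theta> + \<delta>) * (1 + \<theta>) ^ Suc k)" .
    have gf: "foldl F 1 [1..<Suc k + 1] = trunc_bits b (Z * W)" using ZS True unfolding F_def W_def by simp
    have PSk: "P (Suc k) = P k * r" using True PS unfolding r_def by simp
    show ?thesis unfolding F_def[symmetric] \<delta>_def[symmetric] gf PSk using fin Pr1 by simp
  qed
qed



lemma ln2_ge: "2/3 \<le> ln (2::real)"
proof -
  have p: "(24/23::real)^16 \<le> 2" by (simp add: power_divide)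
  have "ln ((24/23::real)^16) \<le> ln 2" using p by (subst ln_le_cancel_iff) auto
  hence a: "16 * ln (24/23::real) \<le> ln 2" by (simp add: ln_realpow)
  have "ln (1/(24/23::real)) \<le> 1/(24/23) - 1" by (rule ln_le_minus_one) simp
  hence "1/24 \<le> ln (24/23::real)" by (simp add: ln_div)
  thus ?thesis using a by linarith
qed

lemma geo_powi:
  "(\<Sum>j\<in>{int m - int n .. int m - 1}. (2::real) powi j) = 2 powi (int m) - 2 powi (int m - int n)"
proof (induction n)
  case 0 thus ?case by simp
next
  case (Suc n)
  have set: "{int m - int n - 1 .. int m - 1} = insert (int m - int n - 1) {int m - int n .. int m - 1}"
    by auto
  have nin: "int m - int n - 1 \<notin> {int m - int n .. int m - 1}" by auto
  have pw: "(2::real) powi (int m - int n) = 2 * 2 powi (int m - int n - 1)"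
    using power_int_add[of "2::real" 1 "int m - int n - 1"] by simp
  have eq: "int m - int (Suc n) = int m - int n - 1" by simp
  show ?case unfolding set eq using nin Suc pw by simp
qed

lemma fixed_repr_lt:
  assumes "fixed_repr n m w" shows "w < 2^m"
proof -
  obtain d :: "int \<Rightarrow> bool" where w: "w = (\<Sum>j\<in>{int m - int n .. int m - 1}. of_bool (d j) * 2 powi j)"
    using assms unfolding fixed_repr_def by blast
  have "w \<le> (\<Sum>j\<in>{int m - int n .. int m - 1}. (2::real) powi j)"
    unfolding w by (rule sum_mono) simp
  also have "\<dots> < 2 powi (int m)" unfolding geo_powi by simp
  finally show ?thesis by simp
qed

lemma key_bound:
  fixes b nf l m :: nat
  assumes b40: "40 \<le> b" and b5: "5 * (real l + 2 * real m + ln (real nf)) \<le> real b" and nf: "1 \<le> nf"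
  shows "256 * 8^m * real nf * 2^l * sqrt (1/2^b) \<le> 1"
proof -
  define X where "X = real l + 2 * real m + ln (real nf)"
  have lnf: "0 \<le> ln (real nf)" using nf by simp
  have hb: "8 + 3 * real m + real l + 3/2 * ln (real nf) \<le> real b / 2"
  proof -
    have "40 \<le> real b" using b40 by simp
    moreover have "0 \<le> real l" by simp
    moreover have "5*real l + 10*real m + 5*ln (real nf) \<le> real b" using b5 by (simp add: algebra_simps)
    ultimately show ?thesis using lnf by linarith
  qed
  have l2: "2/3 \<le> ln (2::real)" by (rule ln2_ge)
  have "ln (real nf) \<le> ln 2 * (3/2 * ln (real nf))"
  proof -
    have "1 * ln (real nf) \<le> (3/2 * ln 2) * ln (real nf)" using l2 lnf by (intro mult_right_mono) auto
    thus ?thesis by (simp add: algebra_simps)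
  qed
  moreover have "ln 2 * (8 + 3 * real m + real l + 3/2 * ln (real nf)) \<le> ln 2 * (real b / 2)"
    using hb by (intro mult_left_mono) auto
  ultimately have lnb: "8 * ln 2 + real m * ln 8 + ln (real nf) + real l * ln 2 \<le> real b / 2 * ln 2"
    using ln_realpow[of "2::real" 3] by (simp add: algebra_simps)
  define K where "K = 256 * 8^m * real nf * (2::real)^l"
  have Kp: "0 < K" unfolding K_def using nf by simp
  have "ln K = ln 256 + ln (8^m) + ln (real nf) + ln (2^l)"
    unfolding K_def using nf by (simp add: ln_mult)
  also have "\<dots> = 8 * ln 2 + real m * ln 8 + ln (real nf) + real l * ln 2"
    using ln_realpow[of "2::real" 8] by (simp add: ln_realpow)
  finally have "ln K \<le> ln (2 powr (real b / 2))" using lnb by (simp add: ln_powr)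
  hence K2: "K \<le> 2 powr (real b / 2)" using Kp by (subst (asm) ln_le_cancel_iff) auto
  have "sqrt (1/2^b) = 1 / 2 powr (real b / 2)"
  proof -
    have "sqrt ((2::real)^b) = (2^b) powr (1/2)" by (simp add: powr_half_sqrt)
    also have "\<dots> = 2 powr (real b / 2)" by (simp add: powr_realpow[symmetric] powr_powr)
    finally show ?thesis by (simp add: real_sqrt_divide)
  qed
  hence "K * sqrt (1/2^b) = K / 2 powr (real b / 2)" by simp
  also have "\<dots> \<le> 1" using K2 by (simp add: divide_le_eq)
  finally show ?thesis unfolding K_def .
qed



lemma final_arith:
  fixes A B N L2 \<beta> P \<theta> \<delta> G :: real
  assumes A: "1 \<le> A" "A*A \<le> B" and N: "1 \<le> N" and L: "1 \<le> L2" and \<beta>: "0 \<le> \<beta>" "256*B*N*L2*\<beta> \<le> 1"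
    and P: "0 \<le> P" "P \<le> A" and \<theta>: "0 \<le> \<theta>" "\<theta> \<le> 68*A*\<beta>" and \<delta>: "0 \<le> \<delta>" "\<delta> \<le> \<beta>"
    and G: "0 \<le> G" "G \<le> 3"
  shows "P * (N*(\<theta>+\<delta>)*G) \<le> 2 / L2"
proof -
  have "1 * \<beta> \<le> A * \<beta>" using A \<beta> by (intro mult_right_mono) auto
  hence h69: "\<theta> + \<delta> \<le> 69*A*\<beta>" using \<theta> \<delta> by linarith
  have "N*(\<theta>+\<delta>) \<le> N*(69*A*\<beta>)" using h69 N by (intro mult_left_mono) auto
  hence "N*(\<theta>+\<delta>)*G \<le> N*(69*A*\<beta>)*3" using N G \<theta> \<delta> A \<beta> by (intro mult_mono) auto
  hence "P * (N*(\<theta>+\<delta>)*G) \<le> A * (N*(69*A*\<beta>)*3)"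
    by (rule mult_mono[OF P(2)]) (use A N \<theta> \<delta> G in auto)
  also have "\<dots> = 207 * (A*A) * N * \<beta>" by (simp add: algebra_simps)
  also have "\<dots> \<le> 207 * B * N * \<beta>" using A N \<beta> by (intro mult_right_mono) auto
  finally have X: "P * (N*(\<theta>+\<delta>)*G) \<le> 207 * B * N * \<beta>" .
  have "207 * B * N * \<beta> * L2 \<le> 2"
  proof -
    have e: "207 * B * N * \<beta> * L2 = (207/256) * (256*B*N*L2*\<beta>)" by (simp add: algebra_simps)
    show ?thesis using e \<beta>(2) by linarith
  qed
  hence "207 * B * N * \<beta> \<le> 2 / L2" using L by (simp add: le_divide_eq)
  thus ?thesis using X by linarith
qed

theorem theorem4:
  fixes w f :: real and fb :: "nat \<Rightarrow> bool" and n m nf l :: nat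
  assumes "fixed_repr n m w"
    and "w > 1"
    and "0 \<le> f" and "f \<le> 1"
    and "f = 1 \<or> f = (\<Sum>i=1..nf. of_bool (fb i) * (1/2) ^ i)"
  shows "\<bar>FractionalPower w f fb n m nf l - w powr f\<bar> \<le> (1/2) powr (real l - 1)"
proof -
  have wm: "w < 2^m" by (rule fixed_repr_lt[OF assms(1)])
  have w1: "1 < w" using assms(2) .
  have rhs: "(1/2::real) powr (real l - 1) = 2 / 2^l"
    by (simp add: powr_diff powr_realpow power_divide)
  have rhs0: "0 \<le> (1/2::real) powr (real l - 1)" by simp
  define b where "b = max n (max nf (max (nat \<lceil>5 * (real l + 2 * real m + ln (real nf))\<rceil>) 40))"
  consider (one) "f = 1" | (zero) "f = 0" | (gen) "f \<noteq> 1" "f \<noteq> 0" "f = (\<Sum>i=1..nf. of_bool (fb i) * (1/2) ^ i)"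
    using assms(5) by blast
  thus ?thesis
  proof cases
    case one
    have "FractionalPower w f fb n m nf l = w" unfolding FractionalPower_def Let_def using one by simp
    thus ?thesis using one w1 rhs0 by simp
  next
    case zero
    have "FractionalPower w f fb n m nf l = 1" unfolding FractionalPower_def Let_def using zero by simp
    thus ?thesis using zero w1 rhs0 by simp
  next
    case gen
    have nf1: "1 \<le> nf"
    proof (rule ccontr)
      assume "\<not> 1 \<le> nf"
      hence "nf = 0" by simp
      thus False using gen by simp
    qed
    define Wf where "Wf = (\<lambda>i. pow2roots w n m b i)"
    have FP: "FractionalPower w f fb n m nf l = foldl (\<lambda>z i. if fb i then trunc_bits b (z * Wf i) else z) 1 [1..<nf+1]"
      unfolding FractionalPower_def Let_def b_def[symmetric] Wf_def using gen by simp
    have b40: "40 \<le> b" unfolding b_def by simp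
    have lnf: "0 \<le> ln (real nf)" using nf1 by simp
    have "5 * (real l + 2 * real m + ln (real nf)) \<le> real (nat \<lceil>5 * (real l + 2 * real m + ln (real nf))\<rceil>)"
      by linarith
    moreover have "nat \<lceil>5 * (real l + 2 * real m + ln (real nf))\<rceil> \<le> b"
      unfolding b_def by (intro max.coboundedI2 max.cobounded1)
    hence "real (nat \<lceil>5 * (real l + 2 * real m + ln (real nf))\<rceil>) \<le> real b" by (simp only: of_nat_le_iff)
    ultimately have b5: "5 * (real l + 2 * real m + ln (real nf)) \<le> real b" by linarith
    define \<beta> where "\<beta> = sqrt (1/2^b :: real)"
    have \<beta>0: "0 \<le> \<beta>" unfolding \<beta>_def by simp
    have \<beta>sq: "\<beta> * \<beta> = 1/2^b" unfolding \<beta>_def by simp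
    have Kb: "256 * 8^m * real nf * 2^l * \<beta> \<le> 1" unfolding \<beta>_def by (rule key_bound[OF b40 b5 nf1])
    have A1: "1 \<le> (2::real)^m" by simp
    have AB: "(2::real)^m * 2^m \<le> 8^m"
    proof -
      have "(2::real)^m * 2^m = 4^m" by (simp add: power_mult_distrib[symmetric])
      also have "\<dots> \<le> 8^m" by (rule power_mono) auto
      finally show ?thesis .
    qed
    have A8: "(2::real)^m \<le> 8^m" by (rule power_mono) auto
    have L1: "1 \<le> (2::real)^l" by simp
    have "1*1 \<le> real nf * 2^l" using nf1 L1 by (intro mult_mono) auto
    hence "(256 * 8^m * \<beta>) * 1 \<le> (256 * 8^m * \<beta>) * (real nf * 2^l)"
      using \<beta>0 by (intro mult_left_mono) auto
    hence Kb1: "256 * 8^m * \<beta> \<le> 1" using Kb by (simp add: algebra_simps)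
    have B1: "(1::real) \<le> 8^m" by simp
    have "1 * \<beta> \<le> 8^m * \<beta>" using B1 \<beta>0 by (intro mult_right_mono) auto
    hence \<beta>s: "\<beta> \<le> 1/256" using Kb1 by linarith
    define \<eta> where "\<eta> = (15 + sqrt (2*2^(m+1))) * \<beta>"
    have sq: "sqrt (2*2^(m+1)) \<le> 2*2^m"
    proof -
      have e1: "(2::real)*2^(m+1) = 4*2^m" by simp
      have e2: "((2::real)*2^m)^2 = 4*(2^m*2^m)" by (simp add: power2_eq_square)
      have "(2::real)^m * 1 \<le> 2^m*2^m" using A1 by (intro mult_left_mono) auto
      hence "2*2^(m+1) \<le> ((2::real)*2^m)^2" unfolding e1 e2 by simp
      hence "sqrt (2*2^(m+1)) \<le> sqrt (((2::real)*2^m)^2)" by (rule real_sqrt_le_mono)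
      also have "sqrt (((2::real)*2^m)^2) = 2*2^m" by (simp only: real_sqrt_abs) simp
      finally show ?thesis .
    qed
    have "15 + sqrt (2*2^(m+1)) \<le> 17 * 2^m" using sq A1 by linarith
    hence \<eta>b: "\<eta> \<le> 17 * 2^m * \<beta>" unfolding \<eta>_def using \<beta>0 by (intro mult_right_mono) auto
    have \<eta>0: "0 \<le> \<eta>" unfolding \<eta>_def using \<beta>0 by simp
    have "2^m * \<beta> \<le> 8^m * (\<beta>::real)" using A8 \<beta>0 by (intro mult_right_mono) auto
    hence "4 * \<eta> \<le> 68 * (8^m * \<beta>)" using \<eta>b by linarith
    hence eta4: "4 * \<eta> \<le> 1" using Kb1 by linarith
    have V: "2^(m+1)/2^b \<le> (1/1000::real)"
    proof -
      have "2^(m+1)/2^b = 2 * (2^m * \<beta>) * \<beta>" using \<beta>sq by (simp add: field_simps)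
      also have "\<dots> \<le> 2 * (8^m * \<beta>) * \<beta>" using A8 \<beta>0 by (intro mult_right_mono mult_left_mono) auto
      also have "\<dots> \<le> 2 * (1/256) * (1/256)" using Kb1 \<beta>s \<beta>0 by (intro mult_mono mult_left_mono) auto
      also have "(2::real) * (1/256) * (1/256) \<le> 1/1000" by simp
      finally show ?thesis .
    qed
    have RL: "\<And>i. 0 < Wf i \<and> \<bar>ln (Wf i) - ln w / 2^i\<bar> \<le> 2*\<eta>"
      unfolding Wf_def using roots_log[OF w1 wm b40 V eta4 \<eta>_def[unfolded \<beta>_def]] by blast
    define \<rho> where "\<rho> = (\<lambda>i::nat. w powr ((1/2)^i))"
    define P where "P = (\<lambda>k. w powr (\<Sum>i=1..k. of_bool (fb i) * (1/2) ^ i))"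
    define \<theta> where "\<theta> = 4 * \<eta>"
    have \<rho>1: "\<And>i. 1 \<le> \<rho> i" unfolding \<rho>_def using w1 by (intro ge_one_powr_ge_zero) auto
    have Wpos: "\<And>i. 0 \<le> Wf i" using RL by (simp add: less_imp_le)
    have Werr: "\<And>i. \<bar>Wf i - \<rho> i\<bar> \<le> \<rho> i * \<theta>"
    proof -
      fix i
      have lr: "ln (\<rho> i) = ln w / 2^i" unfolding \<rho>_def using w1 by (simp add: ln_powr power_divide)
      have "\<bar>Wf i - \<rho> i\<bar> \<le> \<rho> i * (2 * (2*\<eta>))"
        by (rule ratio_err) (use RL \<rho>1[of i] eta4 lr in auto)
      thus "\<bar>Wf i - \<rho> i\<bar> \<le> \<rho> i * \<theta>" unfolding \<theta>_def by simp
    qed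
    have \<theta>0: "0 \<le> \<theta>" unfolding \<theta>_def using \<eta>0 by simp
    have P0: "P 0 = 1" unfolding P_def using w1 by simp
    have PS: "\<And>k. P (Suc k) = (if fb (Suc k) then P k * \<rho> (Suc k) else P k)"
      unfolding P_def \<rho>_def using w1 by (simp add: powr_add)
    have PE: "1 \<le> P nf \<and> \<bar>foldl (\<lambda>z i. if fb i then trunc_bits b (z * Wf i) else z) 1 [1..<nf+1] - P nf\<bar>
           \<le> P nf * (nf * (\<theta> + 1/2^b) * (1+\<theta>)^nf)"
      by (rule prod_err[OF \<rho>1 Wpos Werr \<theta>0 P0 PS])
    have Pf: "P nf = w powr f" unfolding P_def using gen by simp
    have Pb: "w powr f \<le> 2^m"
    proof -
      have "w powr f \<le> w powr 1" using assms(4) w1 by (intro powr_mono) auto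
      thus ?thesis using w1 wm by simp
    qed
    have P0': "0 \<le> w powr f" by simp
    have \<theta>b: "\<theta> \<le> 68 * 2^m * \<beta>" unfolding \<theta>_def using \<eta>b by linarith
    have "2^m * 1 \<le> 8^m * (2::real)^l" using A8 L1 by (intro mult_mono) auto
    hence "2^m * (real nf * \<beta>) \<le> (8^m * 2^l) * (real nf * \<beta>)" using \<beta>0 by (intro mult_right_mono) auto
    hence "2^m * real nf * \<beta> \<le> 1/256" using Kb by (simp add: algebra_simps)
    moreover have "real nf * \<theta> \<le> real nf * (68 * 2^m * \<beta>)" using \<theta>b by (intro mult_left_mono) auto
    ultimately have nt: "real nf * \<theta> \<le> 1" by (simp add: algebra_simps)
    have "(1+\<theta>)^nf \<le> (exp \<theta>)^nf" using \<theta>0 by (intro power_mono) (auto simp: add.commute)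
    also have "\<dots> = exp (real nf * \<theta>)" by (simp add: exp_of_nat_mult)
    also have "\<dots> \<le> exp 1" using nt by simp
    also have "\<dots> \<le> 3" by (rule exp_le)
    finally have G3: "(1+\<theta>)^nf \<le> 3" .
    have G0: "0 \<le> (1+\<theta>)^nf" using \<theta>0 by simp
    have \<delta>b: "1/2^b \<le> \<beta>"
    proof -
      have "\<beta> * \<beta> \<le> \<beta> * 1" using \<beta>s \<beta>0 by (intro mult_left_mono) auto
      thus ?thesis using \<beta>sq by simp
    qed
    have fa: "w powr f * (real nf * (\<theta> + 1/2^b) * (1+\<theta>)^nf) \<le> 2 / 2^l"
      by (rule final_arith[OF A1 AB _ L1 \<beta>0 Kb P0' Pb \<theta>0 \<theta>b _ \<delta>b G0 G3]) (use nf1 in auto)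
    show ?thesis unfolding FP rhs using PE fa unfolding Pf by linarith
  qed
qed


end
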